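(* Let $C$ be a nonsingular affine curve over $\mathbb{R}$ with $C(\mathbb{R})$ compact and non-empty. Let $g\colon C(\mathbb{R})\to\mathbb{R}$ be a continuous semi-algebraic function with $g(x)=0$ for only finitely many $x\in C(\mathbb{R})$. Then there exists $0\ne p\in\mathbb{R}[C]$ with $p^2\le|g|$ on $C(\mathbb{R})$.
   Context: A function $C(\mathbb{R})\to\mathbb{R}$ is semi-algebraic if its graph is a semi-algebraic subset of $C(\mathbb{R})\times\mathbb{R}$. *)

theory Defs
  imports "HOL-Analysis.Analysis"
begin

datatype 'v rpe = RConst real | RVar 'v | RAdd "'v rpe" "'v rpe" | RMul "'v rpe" "'v rpe"

fun reval :: "('v \<Rightarrow> 'a::{real_algebra_1,comm_ring_1}) \<Rightarrow> 'v rpe \<Rightarrow> 'a" where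
  "reval x (RConst c) = of_real c"
| "reval x (RVar v) = x v"
| "reval x (RAdd a b) = reval x a + reval x b"
| "reval x (RMul a b) = reval x a * reval x b"

fun rdiff :: "'v \<Rightarrow> 'v rpe \<Rightarrow> 'v rpe" where
  "rdiff v (RConst c) = RConst 0"
| "rdiff v (RVar w) = RConst (if v = w then 1 else 0)"
| "rdiff v (RAdd a b) = RAdd (rdiff v a) (rdiff v b)"
| "rdiff v (RMul a b) = RAdd (RMul (rdiff v a) b) (RMul a (rdiff v b))"

text \<open>The polynomial ring R[x_v : v in 'n], realised (faithfully, since C is infinite)
  as the ring of polynomial functions with real coefficients on complex affine space.\<close>
definition Rpoly :: "(('n \<Rightarrow> complex) \<Rightarrow> complex) set" where
  "Rpoly = {(\<lambda>z. reval z e) | e. True}"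

definition poly_ideal :: "(('n \<Rightarrow> complex) \<Rightarrow> complex) set \<Rightarrow> bool" where
  "poly_ideal I \<longleftrightarrow> I \<subseteq> Rpoly \<and> (\<lambda>z. 0) \<in> I \<and>
     (\<forall>a\<in>I. \<forall>b\<in>I. (\<lambda>z. a z + b z) \<in> I) \<and>
     (\<forall>f\<in>Rpoly. \<forall>a\<in>I. (\<lambda>z. f z * a z) \<in> I)"

definition prime_poly_ideal :: "(('n \<Rightarrow> complex) \<Rightarrow> complex) set \<Rightarrow> bool" where
  "prime_poly_ideal P \<longleftrightarrow> poly_ideal P \<and> P \<noteq> Rpoly \<and>
     (\<forall>a\<in>Rpoly. \<forall>b\<in>Rpoly. (\<lambda>z. a z * b z) \<in> P \<longrightarrow> a \<in> P \<or> b \<in> P)"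

text \<open>Krull dimension of R[x]/I equals 1, for a prime ideal I: there is a chain of primes
  of length 1 above I but none of length 2.\<close>
definition krull_dim_one :: "(('n \<Rightarrow> complex) \<Rightarrow> complex) set \<Rightarrow> bool" where
  "krull_dim_one I \<longleftrightarrow>
     (\<exists>J. prime_poly_ideal J \<and> I \<subset> J) \<and>
     \<not> (\<exists>J1 J2. prime_poly_ideal J1 \<and> prime_poly_ideal J2 \<and> I \<subset> J1 \<and> J1 \<subset> J2)"

definition affine_curve :: "(('n::finite \<Rightarrow> complex) \<Rightarrow> complex) set \<Rightarrow> bool" where
  "affine_curve I \<longleftrightarrow> prime_poly_ideal I \<and> krull_dim_one I"

text \<open>Nonsingularity via the Jacobian criterion at every complex point: the Jacobian
  matrix of I has rank n - 1 = n - dim C.\<close>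
definition nonsingular_curve :: "(('n::finite \<Rightarrow> complex) \<Rightarrow> complex) set \<Rightarrow> bool" where
  "nonsingular_curve I \<longleftrightarrow> affine_curve I \<and>
     (\<forall>z. (\<forall>f\<in>I. f z = 0) \<longrightarrow>
        (\<exists>es :: nat \<Rightarrow> 'n rpe.
           (\<forall>j < CARD('n) - 1. (\<lambda>w. reval w (es j)) \<in> I) \<and>
           (\<forall>c :: nat \<Rightarrow> complex.
              (\<forall>v. (\<Sum>j<CARD('n) - 1. c j * reval z (rdiff v (es j))) = 0)
              \<longrightarrow> (\<forall>j < CARD('n) - 1. c j = 0))))"

definition real_points :: "(('n \<Rightarrow> complex) \<Rightarrow> complex) set \<Rightarrow> ('n \<Rightarrow> real) set" where
  "real_points I = {x. \<forall>f\<in>I. f (\<lambda>v. complex_of_real (x v)) = 0}"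

text \<open>Value of a polynomial at a real point (real, since coefficients are real).\<close>
definition rval :: "(('n \<Rightarrow> complex) \<Rightarrow> complex) \<Rightarrow> ('n \<Rightarrow> real) \<Rightarrow> real" where
  "rval p x = Re (p (\<lambda>v. complex_of_real (x v)))"

inductive_set semialgebraic :: "('m \<Rightarrow> real) set set" where
  basic: "{x. 0 < reval x e} \<in> semialgebraic"
| compl: "S \<in> semialgebraic \<Longrightarrow> - S \<in> semialgebraic"
| union: "S \<in> semialgebraic \<Longrightarrow> T \<in> semialgebraic \<Longrightarrow> S \<union> T \<in> semialgebraic"

text \<open>A function g : C(R) \<rightarrow> R is semi-algebraic if its graph is a semi-algebraic subset of
  C(R) \<times> R \<subseteq> R^n \<times> R (the extra coordinate is indexed by None).\<close>
definition semialg_fun :: "('n \<Rightarrow> real) set \<Rightarrow> (('n \<Rightarrow> real) \<Rightarrow> real) \<Rightarrow> bool" where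
  "semialg_fun S g \<longleftrightarrow>
     {y :: 'n option \<Rightarrow> real. (\<lambda>v. y (Some v)) \<in> S \<and> y None = g (\<lambda>v. y (Some v))}
       \<in> semialgebraic"

end

theory Submission
  imports Defs "HOL-Computational_Algebra.Polynomial"
begin

lemma reval_real: "reval (\<lambda>v. complex_of_real (x v)) e = complex_of_real (reval x e)"
  by (induct e) auto

lemma Rpoly_real: "f \<in> Rpoly \<Longrightarrow> f (\<lambda>v. complex_of_real (x v)) = complex_of_real (rval f x)"
  unfolding Rpoly_def rval_def by (auto simp: reval_real)

lemma Rpoly_const: "(\<lambda>z. of_real c) \<in> Rpoly"
  unfolding Rpoly_def by (rule CollectI, rule exI[of _ "RConst c"]) auto

lemma Rpoly_add: "f \<in> Rpoly \<Longrightarrow> h \<in> Rpoly \<Longrightarrow> (\<lambda>z. f z + h z) \<in> Rpoly"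
  unfolding Rpoly_def apply clarify
  subgoal for e1 e2 by (auto intro!: exI[of _ "RAdd e1 e2"]) done

lemma Rpoly_mul: "f \<in> Rpoly \<Longrightarrow> h \<in> Rpoly \<Longrightarrow> (\<lambda>z. f z * h z) \<in> Rpoly"
  unfolding Rpoly_def apply clarify
  subgoal for e1 e2 by (auto intro!: exI[of _ "RMul e1 e2"]) done

lemma Rpoly_expr: "(\<lambda>z. reval z e) \<in> Rpoly"
  unfolding Rpoly_def by auto

lemma Rpoly_prod: "finite F \<Longrightarrow> F \<subseteq> Rpoly \<Longrightarrow> (\<lambda>z. \<Prod>f\<in>F. f z) \<in> Rpoly"
proof (induct F rule: finite_induct)
  case empty then show ?case using Rpoly_const[of 1] by simp
next
  case (insert f F) then show ?case using Rpoly_mul[of f "\<lambda>z. \<Prod>f\<in>F. f z"] by simp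
qed

lemma rval_prod: "finite F \<Longrightarrow> F \<subseteq> Rpoly \<Longrightarrow> rval (\<lambda>z. \<Prod>f\<in>F. f z) x = (\<Prod>f\<in>F. rval f x)"
proof -
  assume "finite F" "F \<subseteq> Rpoly"
  then have "(\<Prod>f\<in>F. f (\<lambda>v. complex_of_real (x v))) = (\<Prod>f\<in>F. complex_of_real (rval f x))"
    by (intro prod.cong) (auto simp: Rpoly_real)
  also have "\<dots> = complex_of_real (\<Prod>f\<in>F. rval f x)" by (rule of_real_prod[symmetric])
  finally have eq: "(\<Prod>f\<in>F. f (\<lambda>v. complex_of_real (x v))) = complex_of_real (\<Prod>f\<in>F. rval f x)" .
  show ?thesis unfolding rval_def[of "\<lambda>z. \<Prod>f\<in>F. f z"] eq by (rule Re_complex_of_real)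
qed

lemma cont_reval: "continuous_on S (\<lambda>x::'n\<Rightarrow>real. reval x e)"
proof (induct e)
  case (RVar v) then show ?case
    using continuous_on_subset[OF continuous_on_product_coordinates[of v]] by auto
qed (auto intro!: continuous_intros)

lemma cont_rval: "f \<in> Rpoly \<Longrightarrow> continuous_on S (rval f)"
proof -
  assume "f \<in> Rpoly"
  then obtain e where f: "f = (\<lambda>z. reval z e)" unfolding Rpoly_def by auto
  have "rval f = (\<lambda>x. reval x e)"
    by (rule ext) (simp add: rval_def f reval_real)
  then show ?thesis using cont_reval by simp
qed

lemma bounded_fun: "compact S \<Longrightarrow> continuous_on S f \<Longrightarrow> \<exists>B. \<forall>x\<in>S. \<bar>f x :: real\<bar> \<le> B"
  by (metis compact_continuous_image compact_imp_bounded bounded_real image_eqI)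

lemma bounded_family: "finite F \<Longrightarrow> (\<And>f. f \<in> F \<Longrightarrow> \<exists>B. \<forall>x\<in>S. \<bar>f x :: real\<bar> \<le> B)
   \<Longrightarrow> \<exists>B\<ge>1. \<forall>f\<in>F. \<forall>x\<in>S. \<bar>f x\<bar> \<le> B"
proof (induct F rule: finite_induct)
  case empty then show ?case by auto
next
  case (insert f F)
  then obtain B where B: "B \<ge> 1" "\<forall>f\<in>F. \<forall>x\<in>S. \<bar>f x\<bar> \<le> B" by auto
  from insert.prems[of f] obtain C where C: "\<forall>x\<in>S. \<bar>f x\<bar> \<le> C" by auto
  show ?case
    by (rule exI[of _ "max B C"]) (use B C in \<open>auto intro: le_max_iff_disj[THEN iffD2]\<close>)
qed

lemma I_zero: "f \<in> I \<Longrightarrow> x \<in> real_points I \<Longrightarrow> rval f x = 0"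
  unfolding real_points_def rval_def by auto

lemma notin_I: "x \<in> real_points I \<Longrightarrow> rval f x \<noteq> 0 \<Longrightarrow> f \<notin> I"
  using I_zero by blast

lemma ideal_add: "poly_ideal J \<Longrightarrow> a \<in> J \<Longrightarrow> b \<in> J \<Longrightarrow> (\<lambda>z. a z + b z) \<in> J"
  unfolding poly_ideal_def by simp

lemma ideal_mul: "poly_ideal J \<Longrightarrow> f \<in> Rpoly \<Longrightarrow> a \<in> J \<Longrightarrow> (\<lambda>z. f z * a z) \<in> J"
  unfolding poly_ideal_def by simp

lemma prime_mul: "prime_poly_ideal J \<Longrightarrow> a \<in> Rpoly \<Longrightarrow> b \<in> Rpoly \<Longrightarrow> (\<lambda>z. a z * b z) \<in> J \<Longrightarrow> a \<in> J \<or> b \<in> J"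
  unfolding prime_poly_ideal_def by simp

lemma prod_notin:
  assumes pr: "prime_poly_ideal I" and x: "x \<in> real_points I"
  shows "finite F \<Longrightarrow> F \<subseteq> Rpoly - I \<Longrightarrow> (\<lambda>z. \<Prod>f\<in>F. f z) \<notin> I"
proof (induct F rule: finite_induct)
  case empty
  have "rval (\<lambda>z. 1) x = 1" by (simp add: rval_def)
  then show ?case using notin_I[OF x, of "\<lambda>z. 1"] by simp
next
  case (insert f F)
  have "f \<in> Rpoly" "f \<notin> I" "(\<lambda>z. \<Prod>f\<in>F. f z) \<in> Rpoly" "(\<lambda>z. \<Prod>f\<in>F. f z) \<notin> I"
    using insert Rpoly_prod[of F] by auto
  then have "(\<lambda>z. f z * (\<Prod>f\<in>F. f z)) \<notin> I"
    using prime_mul[OF pr, of f "\<lambda>z. \<Prod>f\<in>F. f z"] by auto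
  then show ?case using insert by simp
qed

lemma Rpoly_diffc: "f \<in> Rpoly \<Longrightarrow> (\<lambda>z. f z - of_real r) \<in> Rpoly"
  using Rpoly_add[OF _ Rpoly_const, of f "-r"] by simp

lemma zero_point:
  fixes I :: "(('n::finite \<Rightarrow> complex) \<Rightarrow> complex) set"
  assumes cur: "affine_curve I" and a: "a \<in> real_points I"
  shows "\<exists>p\<in>Rpoly. p \<notin> I \<and> rval p a = 0"
proof (rule ccontr)
  assume H: "\<not> ?thesis"
  have prI: "prime_poly_ideal I" using cur unfolding affine_curve_def by auto
  obtain J where J: "prime_poly_ideal J" "I \<subset> J"
    using cur unfolding affine_curve_def krull_dim_one_def by auto
  have idJ: "poly_ideal J" using J(1) unfolding prime_poly_ideal_def by auto
  obtain f where f: "f \<in> J" "f \<notin> I" using J(2) by auto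
  have fR: "f \<in> Rpoly" using f idJ unfolding poly_ideal_def by auto
  define r where "r = rval f a"
  define h where "h = (\<lambda>z. f z - complex_of_real r)"
  have hR: "h \<in> Rpoly" unfolding h_def using Rpoly_diffc[OF fR] .
  have "rval h a = 0" unfolding h_def rval_def r_def using Rpoly_real[OF fR, of a]
    by (simp add: rval_def)
  then have hI: "h \<in> I" using H hR by blast
  then have hJ: "h \<in> J" using J(2) by auto
  have "(\<lambda>z. complex_of_real (-1) * h z) \<in> J"
    by (rule ideal_mul[OF idJ Rpoly_const hJ])
  from ideal_add[OF idJ f(1) this] have s: "(\<lambda>z. f z + complex_of_real (-1) * h z) \<in> J" .
  have "(\<lambda>z. f z + complex_of_real (-1) * h z) = (\<lambda>z. complex_of_real r)"
    unfolding h_def by (simp add: fun_eq_iff)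
  with s have cJ: "(\<lambda>z. complex_of_real r) \<in> J" by simp
  show False
  proof (cases "r = 0")
    case True
    then have "h = f" unfolding h_def by simp
    then show False using hI f by simp
  next
    case False
    have "Rpoly \<subseteq> J"
    proof
      fix u :: "('n \<Rightarrow> complex) \<Rightarrow> complex" assume u: "u \<in> Rpoly"
      have "(\<lambda>z. complex_of_real (1/r) * u z) \<in> Rpoly" using Rpoly_mul[OF Rpoly_const u] .
      then have "(\<lambda>z. (complex_of_real (1/r) * u z) * complex_of_real r) \<in> J"
        by (rule ideal_mul[OF idJ _ cJ])
      moreover have "(\<lambda>z. (complex_of_real (1/r) * u z) * complex_of_real r) = u"
        using False by (auto simp: field_simps)
      ultimately show "u \<in> J" by simp
    qed
    then show False using J(1) idJ unfolding prime_poly_ideal_def poly_ideal_def by auto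
  qed
qed

lemma semialg_signs:
  "S \<in> semialgebraic \<Longrightarrow> \<exists>E. \<forall>y y'. (\<forall>e\<in>set E. sgn (reval y e :: real) = sgn (reval y' e)) \<longrightarrow> (y \<in> S \<longleftrightarrow> y' \<in> S)"
proof (induct rule: semialgebraic.induct)
  case (basic e)
  show ?case
  proof (rule exI[of _ "[e]"], intro allI impI)
    fix y y' :: "'a \<Rightarrow> real"
    assume "\<forall>e\<in>set [e]. sgn (reval y e) = sgn (reval y' e)"
    then have "sgn (reval y e) = sgn (reval y' e)" by simp
    then show "y \<in> {x. 0 < reval x e} \<longleftrightarrow> y' \<in> {x. 0 < reval x e}"
      by (metis mem_Collect_eq sgn_greater)
  qed
next
  case (compl S) then show ?case by (metis ComplI Compl_iff)
next
  case (union S T)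
  then obtain E1 E2 where "\<forall>y y'. (\<forall>e\<in>set E1. sgn (reval y e :: real) = sgn (reval y' e)) \<longrightarrow> (y \<in> S \<longleftrightarrow> y' \<in> S)"
     "\<forall>y y'. (\<forall>e\<in>set E2. sgn (reval y e :: real) = sgn (reval y' e)) \<longrightarrow> (y \<in> T \<longleftrightarrow> y' \<in> T)" by blast
  note h = this
  show ?case
  proof (rule exI[of _ "E1 @ E2"], intro allI impI)
    fix y y' :: "'a \<Rightarrow> real"
    assume "\<forall>e\<in>set (E1 @ E2). sgn (reval y e) = sgn (reval y' e)"
    then have "y \<in> S \<longleftrightarrow> y' \<in> S" "y \<in> T \<longleftrightarrow> y' \<in> T" using h by auto
    then show "y \<in> S \<union> T \<longleftrightarrow> y' \<in> S \<union> T" by auto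
  qed
qed

fun topoly :: "('n \<Rightarrow> real) \<Rightarrow> 'n option rpe \<Rightarrow> real poly" where
  "topoly x (RConst c) = [:c:]"
| "topoly x (RVar None) = [:0, 1:]"
| "topoly x (RVar (Some v)) = [:x v:]"
| "topoly x (RAdd a b) = topoly x a + topoly x b"
| "topoly x (RMul a b) = topoly x a * topoly x b"

fun deg :: "'n option rpe \<Rightarrow> nat" where
  "deg (RConst c) = 0"
| "deg (RVar None) = 1"
| "deg (RVar (Some v)) = 0"
| "deg (RAdd a b) = max (deg a) (deg b)"
| "deg (RMul a b) = deg a + deg b"

definition ext :: "('n \<Rightarrow> real) \<Rightarrow> real \<Rightarrow> 'n option \<Rightarrow> real" where
  "ext x s = (\<lambda>opt. case opt of None \<Rightarrow> s | Some v \<Rightarrow> x v)"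

lemma poly_topoly: "poly (topoly x e) s = reval (ext x s) e"
proof (induct e)
  case (RVar w) then show ?case by (cases w) (auto simp: ext_def)
qed auto

lemma degree_topoly: "degree (topoly x e) \<le> deg e"
proof (induct e)
  case (RVar w) then show ?case by (cases w) auto
next
  case (RAdd a b) then show ?case
    unfolding topoly.simps deg.simps
    by (intro degree_add_le) (auto intro: le_trans[OF _ max.cobounded1] le_trans[OF _ max.cobounded2])
next
  case (RMul a b) then show ?case
    unfolding topoly.simps deg.simps using degree_mult_le[of "topoly x a" "topoly x b"] by linarith
qed auto

lemma sum_expr: fixes F :: "nat \<Rightarrow> ('n \<Rightarrow> real) \<Rightarrow> real" shows "(\<And>i. \<exists>c. \<forall>x. reval x c = F i x) \<Longrightarrow> \<exists>c. \<forall>x. reval x c = (\<Sum>i\<le>n. F i x :: real)"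
proof (induct n)
  case 0 then show ?case by simp
next
  case (Suc n)
  then obtain c1 where c1: "\<forall>x. reval x c1 = (\<Sum>i\<le>n. F i x)" by blast
  obtain c2 where c2: "\<forall>x. reval x c2 = F (Suc n) x" using Suc.prems by blast
  show ?case by (rule exI[of _ "RAdd c1 c2"]) (simp add: c1 c2)
qed

lemma coef_exists: "\<exists>c. \<forall>x. reval x c = coeff (topoly x e) k"
proof (induct e arbitrary: k)
  case (RConst r) show ?case
    by (rule exI[of _ "RConst (if k = 0 then r else 0)"]) (cases k, auto)
next
  case (RVar w)
  show ?case
  proof (cases w)
    case None
    show ?thesis
      by (rule exI[of _ "RConst (if k = 1 then 1 else 0)"])
         (cases k, simp add: None, cases "k - 1", auto simp: None)
  next
    case (Some v)
    show ?thesis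
    proof (cases k)
      case 0 then show ?thesis by (intro exI[of _ "RVar v"]) (simp add: Some)
    next
      case (Suc j) then show ?thesis by (intro exI[of _ "RConst 0"]) (simp add: Some)
    qed
  qed
next
  case (RAdd a b)
  obtain c1 c2 where "\<forall>x. reval x c1 = coeff (topoly x a) k" "\<forall>x. reval x c2 = coeff (topoly x b) k"
    using RAdd by blast
  then show ?case by (intro exI[of _ "RAdd c1 c2"]) simp
next
  case (RMul a b)
  have "\<exists>c. \<forall>x. reval x c = (\<Sum>i\<le>k. coeff (topoly x a) i * coeff (topoly x b) (k - i))"
  proof (rule sum_expr)
    fix i
    obtain c1 c2 where "\<forall>x. reval x c1 = coeff (topoly x a) i" "\<forall>x. reval x c2 = coeff (topoly x b) (k - i)"
      using RMul by blast
    then show "\<exists>c. \<forall>x. reval x c = coeff (topoly x a) i * coeff (topoly x b) (k - i)"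
      by (intro exI[of _ "RMul c1 c2"]) simp
  qed
  then show ?case by (simp add: coeff_mult)
qed

lemma root_bound:
  fixes p :: "real poly"
  assumes pt: "poly p t = 0" and t0: "t \<noteq> 0" and p0: "p \<noteq> 0" and dD: "degree p \<le> D"
    and tB: "\<bar>t\<bar> \<le> B" and B1: "1 \<le> B" and A: "\<forall>k. \<bar>coeff p k\<bar> \<le> A"
  shows "\<exists>m\<le>D. coeff p m \<noteq> 0 \<and> \<bar>coeff p m\<bar> \<le> \<bar>t\<bar> * (real D * A * B ^ D)"
proof -
  define m where "m = (LEAST k. coeff p k \<noteq> 0)"
  have ex: "coeff p (degree p) \<noteq> 0" using p0 by simp
  have cm: "coeff p m \<noteq> 0" unfolding m_def using ex by (rule LeastI)
  have mdeg: "m \<le> degree p" unfolding m_def using ex by (rule Least_le)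
  have low: "\<And>k. k < m \<Longrightarrow> coeff p k = 0" unfolding m_def using not_less_Least by blast
  have "poly p t = (\<Sum>k\<le>degree p. coeff p k * t ^ k)" by (rule poly_altdef)
  also have "\<dots> = (\<Sum>k\<le>D. coeff p k * t ^ k)"
    by (rule sum.mono_neutral_left) (use dD coeff_eq_0 le_degree in auto)
  also have "{..D} = {..<m} \<union> {m..D}" using mdeg dD by auto
  also have "(\<Sum>k\<in>{..<m} \<union> {m..D}. coeff p k * t ^ k) = (\<Sum>k\<in>{m..D}. coeff p k * t ^ k)"
    by (subst sum.union_disjoint) (auto simp: low)
  also have "{m..D} = insert m {m<..D}" using mdeg dD by auto
  also have "(\<Sum>k\<in>insert m {m<..D}. coeff p k * t ^ k) = coeff p m * t ^ m + (\<Sum>k\<in>{m<..D}. coeff p k * t ^ k)"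
    by simp
  also have "(\<Sum>k\<in>{m<..D}. coeff p k * t ^ k) = t ^ m * (t * (\<Sum>k\<in>{m<..D}. coeff p k * t ^ (k - m - 1)))"
    unfolding sum_distrib_left
  proof (rule sum.cong)
    fix k assume "k \<in> {m<..D}"
    then have "k = m + Suc (k - m - 1)" by auto
    then have "t ^ k = t ^ m * (t * t ^ (k - m - 1))" by (metis power_Suc power_add)
    then show "coeff p k * t ^ k = t ^ m * (t * (coeff p k * t ^ (k - m - 1)))" by simp
  qed simp
  finally have eq0: "0 = t ^ m * (coeff p m + t * (\<Sum>k\<in>{m<..D}. coeff p k * t ^ (k - m - 1)))"
    using pt by (simp add: algebra_simps)
  have "t ^ m \<noteq> 0" using t0 by simp
  then have eq: "coeff p m = - (t * (\<Sum>k\<in>{m<..D}. coeff p k * t ^ (k - m - 1)))"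
    using eq0 t0 by (simp add: eq_neg_iff_add_eq_0)
  have "\<bar>\<Sum>k\<in>{m<..D}. coeff p k * t ^ (k - m - 1)\<bar> \<le> (\<Sum>k\<in>{m<..D}. A * B ^ D)"
  proof (rule order_trans[OF sum_abs], rule sum_mono)
    fix k assume k: "k \<in> {m<..D}"
    have "\<bar>t\<bar> ^ (k - m - 1) \<le> B ^ (k - m - 1)" by (rule power_mono) (use tB in auto)
    also have "\<dots> \<le> B ^ D" by (rule power_increasing) (use k B1 in auto)
    finally have "\<bar>t ^ (k - m - 1)\<bar> \<le> B ^ D" by (simp add: power_abs)
    moreover have "\<bar>coeff p k\<bar> \<le> A" using A by auto
    ultimately show "\<bar>coeff p k * t ^ (k - m - 1)\<bar> \<le> A * B ^ D"
      by (simp add: abs_mult mult_mono')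
  qed
  also have "\<dots> = real (D - m) * (A * B ^ D)" by simp
  also have "\<dots> \<le> real D * (A * B ^ D)"
  proof (rule mult_right_mono)
    have "0 \<le> \<bar>coeff p 0\<bar>" by simp
    then have "0 \<le> A" using A by (meson order_trans)
    then show "0 \<le> A * B ^ D" using B1 by simp
  qed simp
  finally have "\<bar>coeff p m\<bar> \<le> \<bar>t\<bar> * (real D * A * B ^ D)"
    unfolding eq by (simp add: abs_mult mult_left_mono mult.assoc)
  then show ?thesis using cm mdeg dD by (intro exI[of _ m]) auto
qed

lemma fiber:
  fixes G :: "('n option \<Rightarrow> real) set" and x :: "'n \<Rightarrow> real"
  assumes E: "\<forall>y y'. (\<forall>e\<in>set E. sgn (reval y e :: real) = sgn (reval y' e)) \<longrightarrow> (y \<in> G \<longleftrightarrow> y' \<in> G)"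
    and G: "\<And>s. ext x s \<in> G \<longleftrightarrow> s = t"
  shows "\<exists>e\<in>set E. poly (topoly x e) t = 0 \<and> topoly x e \<noteq> 0"
proof (rule ccontr)
  assume H: "\<not> ?thesis"
  have "\<forall>e\<in>set E. \<forall>\<^sub>F s in at t. sgn (poly (topoly x e) s) = sgn (poly (topoly x e) t)"
  proof
    fix e assume "e \<in> set E"
    then have h: "poly (topoly x e) t \<noteq> 0 \<or> topoly x e = 0" using H by auto
    have lim: "((\<lambda>s. poly (topoly x e) s) \<longlongrightarrow> poly (topoly x e) t) (at t)"
      by (intro tendsto_intros)
    show "\<forall>\<^sub>F s in at t. sgn (poly (topoly x e) s) = sgn (poly (topoly x e) t)"
    proof (cases "topoly x e = 0")
      case True then show ?thesis by simp
    next
      case False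
      then have nz: "poly (topoly x e) t \<noteq> 0" using h by auto
      show ?thesis
      proof (cases "poly (topoly x e) t > 0")
        case True
        then have "\<forall>\<^sub>F s in at t. 0 < poly (topoly x e) s" using order_tendstoD(1)[OF lim] by blast
        then show ?thesis by eventually_elim (use True in simp)
      next
        case False
        then have neg: "poly (topoly x e) t < 0" using nz by auto
        then have "\<forall>\<^sub>F s in at t. poly (topoly x e) s < 0" using order_tendstoD(2)[OF lim] by blast
        then show ?thesis by eventually_elim (use neg in simp)
      qed
    qed
  qed
  then have "\<forall>\<^sub>F s in at t. \<forall>e\<in>set E. sgn (poly (topoly x e) s) = sgn (poly (topoly x e) t)"
    by (rule eventually_ball_finite[rotated]) simp
  moreover have "\<forall>\<^sub>F s in at t. s \<noteq> t" by (rule eventually_neq_at_within)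
  ultimately have "\<forall>\<^sub>F s in at t. s \<noteq> t \<and> (\<forall>e\<in>set E. sgn (poly (topoly x e) s) = sgn (poly (topoly x e) t))"
    by eventually_elim auto
  then obtain s where s: "s \<noteq> t" "\<forall>e\<in>set E. sgn (poly (topoly x e) s) = sgn (poly (topoly x e) t)"
    using eventually_happens at_neq_bot by blast
  then have "\<forall>e\<in>set E. sgn (reval (ext x s) e) = sgn (reval (ext x t) e)"
    by (simp add: poly_topoly)
  then have "ext x s \<in> G \<longleftrightarrow> ext x t \<in> G" using E by blast
  then show False using G s(1) by blast
qed

lemma prod_bound:
  fixes h :: "'a \<Rightarrow> real"
  assumes "finite F" "q \<in> F" "\<forall>f\<in>F. \<bar>h f\<bar> \<le> U" "1 \<le> U"
  shows "\<bar>\<Prod>f\<in>F. h f\<bar> \<le> \<bar>h q\<bar> * U ^ card F"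
proof -
  have "(\<Prod>f\<in>F. h f) = h q * (\<Prod>f\<in>F - {q}. h f)" using assms by (simp add: prod.remove)
  moreover have "\<bar>\<Prod>f\<in>F - {q}. h f\<bar> \<le> U ^ card (F - {q})"
  proof -
    have "\<bar>\<Prod>f\<in>F - {q}. h f\<bar> = (\<Prod>f\<in>F - {q}. \<bar>h f\<bar>)" by (simp add: abs_prod)
    also have "\<dots> \<le> (\<Prod>f\<in>F - {q}. U)" by (rule prod_mono) (use assms in auto)
    finally show ?thesis by simp
  qed
  moreover have "U ^ card (F - {q}) \<le> U ^ card F"
    by (rule power_increasing) (use assms in \<open>auto simp: card_Diff_subset\<close>)
  ultimately have "\<bar>\<Prod>f\<in>F - {q}. h f\<bar> \<le> U ^ card F" "(\<Prod>f\<in>F. h f) = h q * (\<Prod>f\<in>F - {q}. h f)"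
    by linarith+
  then show ?thesis unfolding abs_mult by (simp add: abs_mult mult_left_mono)
qed

theorem lemma1p5:
  fixes I :: "(('n::finite \<Rightarrow> complex) \<Rightarrow> complex) set"
    and g :: "('n \<Rightarrow> real) \<Rightarrow> real"
  assumes "nonsingular_curve I"
    and "compact (real_points I)" and "real_points I \<noteq> {}"
    and "continuous_on (real_points I) g"
    and "semialg_fun (real_points I) g"
    and "finite {x \<in> real_points I. g x = 0}"
  shows "\<exists>p\<in>Rpoly. p \<notin> I \<and> (\<forall>x\<in>real_points I. (rval p x)\<^sup>2 \<le> \<bar>g x\<bar>)"
proof -
  have cur: "affine_curve I" using assms(1) unfolding nonsingular_curve_def by auto
  have pr: "prime_poly_ideal I" using cur unfolding affine_curve_def by auto
  define S where "S = real_points I"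
  obtain x0 where x0: "x0 \<in> S" using assms(3) unfolding S_def by auto
  define G where "G = {y :: 'n option \<Rightarrow> real. (\<lambda>v. y (Some v)) \<in> S \<and> y None = g (\<lambda>v. y (Some v))}"
  have "G \<in> semialgebraic" using assms(5) unfolding semialg_fun_def G_def S_def .
  from semialg_signs[OF this] obtain E where
    E: "\<forall>y y'. (\<forall>e\<in>set E. sgn (reval y e :: real) = sgn (reval y' e)) \<longrightarrow> (y \<in> G \<longleftrightarrow> y' \<in> G)"
    by blast
  have extS: "(\<lambda>v. ext x s (Some v)) = x" for x s by (simp add: ext_def)
  have extN: "ext x s None = s" for x s by (simp add: ext_def)
  have fib: "\<exists>e\<in>set E. poly (topoly x e) (g x) = 0 \<and> topoly x e \<noteq> 0" if "x \<in> S" for x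
    by (rule fiber[OF E]) (use that in \<open>simp add: G_def extS extN\<close>)
  define D where "D = (\<Sum>e\<in>set E. deg e)"
  have degD: "degree (topoly x e) \<le> D" if "e \<in> set E" for x e
  proof -
    have "deg e \<le> D" unfolding D_def using that by (intro member_le_sum) auto
    then show ?thesis using degree_topoly[of x e] by linarith
  qed
  define c :: "'n option rpe \<Rightarrow> nat \<Rightarrow> 'n rpe" where "c e k = (SOME c. \<forall>x. reval x c = coeff (topoly x e) k)" for e k
  have c: "reval x (c e k) = coeff (topoly x e) k" for x e k
    using someI_ex[OF coef_exists[of e k]] unfolding c_def by blast
  define qf where "qf e k = (\<lambda>z::'n\<Rightarrow>complex. reval z (c e k))" for e k
  have qfR: "qf e k \<in> Rpoly" for e k unfolding qf_def by (rule Rpoly_expr)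
  have rq: "rval (qf e k) x = coeff (topoly x e) k" for e k x
    by (simp add: rval_def qf_def reval_real c)
  define Qs where "Qs = (\<lambda>(e,k). qf e k) ` (set E \<times> {..D})"
  define Z where "Z = {x\<in>S. g x = 0}"
  have Zfin: "finite Z" using assms(6) unfolding Z_def S_def .
  have "\<forall>a\<in>Z. \<exists>p\<in>Rpoly. p \<notin> I \<and> rval p a = 0"
    using zero_point[OF cur] unfolding Z_def S_def by auto
  then obtain pz where pz: "\<forall>a\<in>Z. pz a \<in> Rpoly \<and> pz a \<notin> I \<and> rval (pz a) a = 0"
    by metis
  define F where "F = (Qs - I) \<union> pz ` Z"
  have Ffin: "finite F" unfolding F_def Qs_def using Zfin by auto
  have FR: "F \<subseteq> Rpoly - I" unfolding F_def Qs_def using pz qfR by auto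
  obtain U where U: "U \<ge> 1" "\<forall>h\<in>rval ` F. \<forall>x\<in>S. \<bar>h x\<bar> \<le> U"
  proof -
    have "\<exists>B\<ge>1. \<forall>h\<in>rval ` F. \<forall>x\<in>S. \<bar>h x\<bar> \<le> B"
    proof (rule bounded_family)
      show "finite (rval ` F)" using Ffin by simp
    next
      fix h assume "h \<in> rval ` F"
      then obtain f where "f \<in> F" "h = rval f" by auto
      then have "continuous_on S h" using FR cont_rval by auto
      then show "\<exists>B. \<forall>x\<in>S. \<bar>h x\<bar> \<le> B" using bounded_fun assms(2) unfolding S_def by blast
    qed
    then show ?thesis using that by blast
  qed
  have Uf: "\<bar>rval f x\<bar> \<le> U" if "f \<in> F" "x \<in> S" for f x using U(2) that by auto
  obtain A where A: "A \<ge> 1" "\<forall>h\<in>(\<lambda>(e,k). rval (qf e k)) ` (set E \<times> {..D}). \<forall>x\<in>S. \<bar>h x\<bar> \<le> A"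
  proof -
    have "\<exists>B\<ge>1. \<forall>h\<in>(\<lambda>(e,k). rval (qf e k)) ` (set E \<times> {..D}). \<forall>x\<in>S. \<bar>h x\<bar> \<le> B"
    proof (rule bounded_family)
      show "finite ((\<lambda>(e,k). rval (qf e k)) ` (set E \<times> {..D}))" by simp
    next
      fix h assume "h \<in> (\<lambda>(e,k). rval (qf e k)) ` (set E \<times> {..D})"
      then obtain e k where "h = rval (qf e k)" by auto
      then have "continuous_on S h" using qfR cont_rval by auto
      then show "\<exists>B. \<forall>x\<in>S. \<bar>h x\<bar> \<le> B" using bounded_fun assms(2) unfolding S_def by blast
    qed
    then show ?thesis using that by blast
  qed
  have Acoef: "\<bar>coeff (topoly x e) k\<bar> \<le> A" if "e \<in> set E" "x \<in> S" for e x k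
  proof (cases "k \<le> D")
    case True
    then have "rval (qf e k) \<in> (\<lambda>(e,k). rval (qf e k)) ` (set E \<times> {..D})" using that by auto
    then show ?thesis using A(2) that rq by metis
  next
    case False
    then have "coeff (topoly x e) k = 0" using degD[OF that(1), of x] by (intro coeff_eq_0) auto
    then show ?thesis using A(1) by simp
  qed
  obtain Bg where Bg: "\<forall>x\<in>S. \<bar>g x\<bar> \<le> Bg" using bounded_fun[OF assms(2) assms(4)] unfolding S_def by blast
  define B where "B = max 1 Bg"
  have B1: "1 \<le> B" unfolding B_def by simp
  have gB: "\<bar>g x\<bar> \<le> B" if "x \<in> S" for x using Bg that unfolding B_def by force
  define K where "K = real D * A * B ^ D"
  have K0: "0 \<le> K" unfolding K_def using A(1) B1 by simp
  define N where "N = card F"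
  define M where "M = (K + 1) * U ^ (2 * N + 1)"
  have M0: "0 < M" unfolding M_def using K0 U(1) by simp
  define cc where "cc = 1 / sqrt M"
  have cc0: "cc \<noteq> 0" unfolding cc_def using M0 by simp
  have cc2: "cc\<^sup>2 = 1 / M" unfolding cc_def using M0 by (simp add: power_divide)
  define P where "P = (\<lambda>z::'n\<Rightarrow>complex. \<Prod>f\<in>F. f z)"
  have PR: "P \<in> Rpoly" unfolding P_def using Rpoly_prod[OF Ffin] FR by auto
  have PI: "P \<notin> I" unfolding P_def using prod_notin[OF pr, of x0 F] x0 Ffin FR unfolding S_def by auto
  have rP: "rval P x = (\<Prod>f\<in>F. rval f x)" for x unfolding P_def using rval_prod[OF Ffin] FR by auto
  define p where "p = (\<lambda>z::'n\<Rightarrow>complex. complex_of_real cc * P z)"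
  have pR: "p \<in> Rpoly" unfolding p_def by (rule Rpoly_mul[OF Rpoly_const PR])
  have constI: "(\<lambda>z::'n\<Rightarrow>complex. complex_of_real cc) \<notin> I"
    by (rule notin_I[of x0]) (use x0 cc0 in \<open>simp_all add: S_def rval_def\<close>)
  have pI: "p \<notin> I"
    using prime_mul[OF pr Rpoly_const PR] constI PI unfolding p_def by blast
  have rp: "rval p x = cc * (\<Prod>f\<in>F. rval f x)" for x
    using Rpoly_real[OF PR, of x] unfolding p_def rval_def[of "\<lambda>z. complex_of_real cc * P z"]
    by (simp add: rP del: of_real_prod)
  have main: "(rval p x)\<^sup>2 \<le> \<bar>g x\<bar>" if xS: "x \<in> S" for x
  proof (cases "g x = 0")
    case True
    then have xZ: "x \<in> Z" unfolding Z_def using xS by auto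
    then have "pz x \<in> F" "rval (pz x) x = 0" using pz unfolding F_def by auto
    then have "(\<Prod>f\<in>F. rval f x) = 0" using Ffin by (metis prod_zero_iff)
    then show ?thesis by (simp add: rp)
  next
    case False
    obtain e where e: "e \<in> set E" "poly (topoly x e) (g x) = 0" "topoly x e \<noteq> 0"
      using fib[OF xS] by blast
    obtain m where m: "m \<le> D" "coeff (topoly x e) m \<noteq> 0"
      "\<bar>coeff (topoly x e) m\<bar> \<le> \<bar>g x\<bar> * (real D * A * B ^ D)"
      using root_bound[OF e(2) False e(3) degD[OF e(1)] gB[OF xS] B1, of A] Acoef[OF e(1) xS]
      by blast
    define q where "q = qf e m"
    have rqx: "rval q x = coeff (topoly x e) m" unfolding q_def by (rule rq)
    have "q \<notin> I" using notin_I[of x I q] xS m(2) rqx unfolding S_def by auto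
    moreover have "q \<in> Qs" unfolding Qs_def q_def using e(1) m(1) by auto
    ultimately have qF: "q \<in> F" unfolding F_def by auto
    define a where "a = \<bar>rval q x\<bar>"
    define Pv where "Pv = \<bar>\<Prod>f\<in>F. rval f x\<bar>"
    have a0: "0 \<le> a" unfolding a_def by simp
    have aU: "a \<le> U" unfolding a_def using Uf[OF qF xS] .
    have aK: "a \<le> \<bar>g x\<bar> * K" unfolding a_def K_def rqx using m(3) .
    have Pa: "Pv \<le> a * U ^ N" unfolding Pv_def a_def N_def
      using prod_bound[OF Ffin qF, of "\<lambda>f. rval f x" U] Uf xS U(1) by auto
    have "Pv\<^sup>2 \<le> (a * U ^ N)\<^sup>2" by (rule power_mono[OF Pa]) (simp add: Pv_def)
    also have "\<dots> = (a * a) * U ^ (2 * N)" by (simp add: power2_eq_square power_mult algebra_simps)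
    also have "\<dots> \<le> (\<bar>g x\<bar> * K * U) * U ^ (2 * N)"
    proof (rule mult_right_mono)
      show "a * a \<le> \<bar>g x\<bar> * K * U" using mult_mono[OF aK aU mult_nonneg_nonneg[OF abs_ge_zero K0] a0] by simp
    qed simp
    also have "\<dots> = \<bar>g x\<bar> * K * U ^ (2 * N + 1)" by (simp add: algebra_simps)
    also have "\<dots> \<le> \<bar>g x\<bar> * M"
    proof -
      have "K * U ^ (2 * N + 1) \<le> (K + 1) * U ^ (2 * N + 1)" using U(1) by (intro mult_right_mono) auto
      then have "\<bar>g x\<bar> * (K * U ^ (2 * N + 1)) \<le> \<bar>g x\<bar> * ((K + 1) * U ^ (2 * N + 1))"
        by (rule mult_left_mono) simp
      then show ?thesis unfolding M_def by (simp only: mult.assoc)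
    qed
    finally have PM: "Pv\<^sup>2 \<le> \<bar>g x\<bar> * M" .
    have "(rval p x)\<^sup>2 = cc\<^sup>2 * Pv\<^sup>2" unfolding rp Pv_def by (simp add: power_mult_distrib)
    also have "\<dots> = Pv\<^sup>2 / M" using cc2 by simp
    also have "\<dots> \<le> \<bar>g x\<bar>" using PM M0 by (simp add: divide_le_eq)
    finally show ?thesis .
  qed
  show ?thesis using pR pI main unfolding S_def by blast
qed

end
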